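(* For $n\ge 0$ let $L_n$ be the lattice consisting of a bottom element $\perp$, a top element $\top$, and $n$ pairwise incomparable elements $a_1,\dots,a_n$ with $\perp<a_i<\top$ for all $i$ (so $L_0$ is the two-element chain and $L_1$ is the three-element chain). Then $|\mathrm{Tr}(L_n)|=2^{n+1}+n$. Furthermore, for $n\ge 1$, the lattice $\mathrm{Tr}(L_n)$ is the disjoint union of three subsets $B$, $M$, $T$, where $B\cong[1]^n$ and $T\cong[1]^n$ as subposets (Boolean lattices on $n$ atoms), $M$ has $n$ elements, and the covering relations of $\mathrm{Tr}(L_n)$ are exactly those internal to $B$, those internal to $T$, and the following: (i) there is a bijection between the $n$ elements of $B$ covered by $\max B$ and the elements of $M$, and each element of $M$ covers exactly its corresponding element of $B$; (ii) there is a bijection between the $n$ elements of $T$ covering $\min T$ and the elements of $M$, and each such element of $T$ covers exactly its corresponding element of $M$; (iii) $\min T$ covers $\max B$. Explicitly, $B$ consists of the transfer systems whose non-reflexive relations form a subset of $\{\perp\,R\,a_i\}$; $T$ consists of those containing all $\perp\,R\,a_i$, $\perp\,R\,\top$, and a subset of $\{a_i\,R\,\top\}$; $M$ consists of, for each $i$, the transfer system whose non-reflexive relations are $a_i\,R\,\top$ and $\perp\,R\,a_j$ for all $j\ne i$.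
   Context: For a finite lattice $(P,\le)$, a transfer system on $P$ is a partial order $R$ on $P$ refining $\le$ (i.e. $x\,R\,y\Rightarrow x\le y$) that is closed under restriction: if $x\,R\,z$ and $y\le z$ then $(x\wedge y)\,R\,y$. $\mathrm{Tr}(P)$ denotes the set of transfer systems on $P$, partially ordered by inclusion of relations ($R\le R'$ iff $x\,R\,y\Rightarrow x\,R'\,y$); it is a finite lattice. *)

theory Defs
  imports Main
begin

definition lat_meet :: "'a set \<Rightarrow> ('a \<Rightarrow> 'a \<Rightarrow> bool) \<Rightarrow> 'a \<Rightarrow> 'a \<Rightarrow> 'a" where
  "lat_meet P le x y =
     (THE m. m \<in> P \<and> le m x \<and> le m y \<and> (\<forall>w\<in>P. le w x \<and> le w y \<longrightarrow> le w m))"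

definition transfer_system :: "'a set \<Rightarrow> ('a \<Rightarrow> 'a \<Rightarrow> bool) \<Rightarrow> ('a \<times> 'a) set \<Rightarrow> bool" where
  "transfer_system P le R \<longleftrightarrow>
     R \<subseteq> P \<times> P \<and> refl_on P R \<and> antisym R \<and> trans R \<and>
     (\<forall>x y. (x, y) \<in> R \<longrightarrow> le x y) \<and>
     (\<forall>x y z. (x, z) \<in> R \<longrightarrow> y \<in> P \<longrightarrow> le y z \<longrightarrow> (lat_meet P le x y, y) \<in> R)"

definition Tr :: "'a set \<Rightarrow> ('a \<Rightarrow> 'a \<Rightarrow> bool) \<Rightarrow> ('a \<times> 'a) set set" where
  "Tr P le = {R. transfer_system P le R}"

definition covers :: "'b set set \<Rightarrow> 'b set \<Rightarrow> 'b set \<Rightarrow> bool" where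
  "covers S X Y \<longleftrightarrow> X \<in> S \<and> Y \<in> S \<and> X \<subset> Y \<and> \<not> (\<exists>Z\<in>S. X \<subset> Z \<and> Z \<subset> Y)"

datatype elt = Bot | At nat | Top

definition Ln :: "nat \<Rightarrow> elt set" where
  "Ln n = {Bot, Top} \<union> At ` {..<n}"

fun Ln_le :: "elt \<Rightarrow> elt \<Rightarrow> bool" where
  "Ln_le Bot _ = True"
| "Ln_le _ Top = True"
| "Ln_le (At i) (At j) = (i = j)"
| "Ln_le _ _ = False"

abbreviation TrL :: "nat \<Rightarrow> (elt \<times> elt) set set" where
  "TrL n \<equiv> Tr (Ln n) Ln_le"

definition Bset :: "nat \<Rightarrow> (elt \<times> elt) set set" where
  "Bset n = {R \<in> TrL n. R - Id \<subseteq> {(Bot, At i) | i. i < n}}"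

definition Tset :: "nat \<Rightarrow> (elt \<times> elt) set set" where
  "Tset n = {R \<in> TrL n. (\<forall>i<n. (Bot, At i) \<in> R) \<and> (Bot, Top) \<in> R \<and>
     R - Id \<subseteq> {(Bot, At i) | i. i < n} \<union> {(Bot, Top)} \<union> {(At i, Top) | i. i < n}}"

definition Mrel :: "nat \<Rightarrow> nat \<Rightarrow> (elt \<times> elt) set" where
  "Mrel n i = Id_on (Ln n) \<union> {(At i, Top)} \<union> {(Bot, At j) | j. j < n \<and> j \<noteq> i}"

definition Mset :: "nat \<Rightarrow> (elt \<times> elt) set set" where
  "Mset n = Mrel n ` {..<n}"

end

theory Submission
  imports Defs
begin

lemma Ln_mem[simp]: "Bot \<in> Ln n" "Top \<in> Ln n" "At i \<in> Ln n \<longleftrightarrow> i < n"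
  by (auto simp: Ln_def)

fun meet :: "elt \<Rightarrow> elt \<Rightarrow> elt" where
  "meet Bot y = Bot"
| "meet (At i) Bot = Bot"
| "meet (At i) (At j) = (if i = j then At i else Bot)"
| "meet (At i) Top = At i"
| "meet Top y = y"

lemma Ln_le_refl[simp]: "Ln_le y y" by (cases y) auto

lemma meet_glb: "Ln_le w x \<Longrightarrow> Ln_le w y \<Longrightarrow> Ln_le w (meet x y)"
  by (cases w; cases x; cases y) auto
lemma meet_le: "Ln_le (meet x y) x" "Ln_le (meet x y) y"
  by (cases x; cases y; auto)+
lemma Ln_antisym: "Ln_le a b \<Longrightarrow> Ln_le b a \<Longrightarrow> a = b"
  by (cases a; cases b) auto
lemma meet_in: "x \<in> Ln n \<Longrightarrow> y \<in> Ln n \<Longrightarrow> meet x y \<in> Ln n"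
  by (cases x; cases y) (auto simp: Ln_def)

lemma lat_meet_eq: assumes "x \<in> Ln n" "y \<in> Ln n"
  shows "lat_meet (Ln n) Ln_le x y = meet x y"
  unfolding lat_meet_def
proof (rule the_equality)
  show "meet x y \<in> Ln n \<and> Ln_le (meet x y) x \<and> Ln_le (meet x y) y \<and>
    (\<forall>w\<in>Ln n. Ln_le w x \<and> Ln_le w y \<longrightarrow> Ln_le w (meet x y))"
    using meet_in[OF assms] meet_le meet_glb by blast
next
  fix m assume m: "m \<in> Ln n \<and> Ln_le m x \<and> Ln_le m y \<and> (\<forall>w\<in>Ln n. Ln_le w x \<and> Ln_le w y \<longrightarrow> Ln_le w m)"
  then have "Ln_le m (meet x y)" using meet_glb by blast
  moreover have "Ln_le (meet x y) m" using m meet_in[OF assms] meet_le by blast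
  ultimately show "m = meet x y" by (rule Ln_antisym)
qed

definition rel :: "nat \<Rightarrow> nat set \<Rightarrow> bool \<Rightarrow> nat set \<Rightarrow> (elt \<times> elt) set" where
  "rel n SB bt ST = Id_on (Ln n) \<union> {(Bot, At i) |i. i \<in> SB} \<union> (if bt then {(Bot, Top)} else {})
     \<union> {(At i, Top) |i. i \<in> ST}"

lemma mem_rel: "(a, b) \<in> rel n SB bt ST \<longleftrightarrow> (a = b \<and> a \<in> Ln n) \<or> (a = Bot \<and> (\<exists>i\<in>SB. b = At i))
   \<or> (bt \<and> a = Bot \<and> b = Top) \<or> (b = Top \<and> (\<exists>i\<in>ST. a = At i))"
  by (auto simp: rel_def)

lemma rel_sub: "rel n A b C \<subseteq> rel n A' b' C' \<longleftrightarrow> A \<subseteq> A' \<and> (b \<longrightarrow> b') \<and> C \<subseteq> C'"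
proof
  assume h: "rel n A b C \<subseteq> rel n A' b' C'"
  have "A \<subseteq> A'"
  proof
    fix i assume "i \<in> A" then have "(Bot, At i) \<in> rel n A b C" by (auto simp: mem_rel)
    then have "(Bot, At i) \<in> rel n A' b' C'" using h by blast
    then show "i \<in> A'" by (auto simp: mem_rel)
  qed
  moreover have "b \<longrightarrow> b'"
  proof
    assume "b" then have "(Bot, Top) \<in> rel n A b C" by (auto simp: mem_rel)
    then have "(Bot, Top) \<in> rel n A' b' C'" using h by blast
    then show "b'" by (auto simp: mem_rel)
  qed
  moreover have "C \<subseteq> C'"
  proof
    fix i assume "i \<in> C" then have "(At i, Top) \<in> rel n A b C" by (auto simp: mem_rel)
    then have "(At i, Top) \<in> rel n A' b' C'" using h by blast
    then show "i \<in> C'" by (auto simp: mem_rel)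
  qed
  ultimately show "A \<subseteq> A' \<and> (b \<longrightarrow> b') \<and> C \<subseteq> C'" by blast
next
  assume "A \<subseteq> A' \<and> (b \<longrightarrow> b') \<and> C \<subseteq> C'"
  then show "rel n A b C \<subseteq> rel n A' b' C'" by (auto simp: rel_def)
qed

lemma rel_eq: "rel n A b C = rel n A' b' C' \<longleftrightarrow> A = A' \<and> b = b' \<and> C = C'"
  by (auto simp: set_eq_subset rel_sub)

lemma ts_rel:
  assumes "SB \<subseteq> {..<n}" "ST \<subseteq> {..<n}" "bt \<longrightarrow> SB = {..<n}"
    "\<forall>i\<in>ST. \<forall>j<n. j \<noteq> i \<longrightarrow> j \<in> SB" "\<forall>i\<in>ST. i \<in> SB \<longrightarrow> bt"
  shows "transfer_system (Ln n) Ln_le (rel n SB bt ST)"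
proof -
  let ?R = "rel n SB bt ST"
  have sub: "?R \<subseteq> Ln n \<times> Ln n" using assms(1,2) by (auto simp: mem_rel subset_iff)
  have refl: "refl_on (Ln n) ?R" by (auto simp: refl_on_def mem_rel)
  have anti: "antisym ?R" by (auto simp: antisym_def mem_rel)
  have tr: "trans ?R" using assms(5) by (auto simp: trans_def mem_rel)
  have le: "\<forall>x y. (x, y) \<in> ?R \<longrightarrow> Ln_le x y" by (auto simp: mem_rel)
  have res: "\<forall>x y z. (x, z) \<in> ?R \<longrightarrow> y \<in> Ln n \<longrightarrow> Ln_le y z \<longrightarrow> (lat_meet (Ln n) Ln_le x y, y) \<in> ?R"
  proof (intro allI impI)
    fix x y z assume xz: "(x, z) \<in> ?R" and y: "y \<in> Ln n" and yz: "Ln_le y z"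
    have x: "x \<in> Ln n" using xz sub by blast
    have "(meet x y, y) \<in> ?R"
    proof -
      from xz consider "x = z" "x \<in> Ln n" | i where "x = Bot" "i \<in> SB" "z = At i"
        | "bt" "x = Bot" "z = Top" | i where "z = Top" "i \<in> ST" "x = At i"
        unfolding mem_rel by blast
      then show ?thesis
      proof cases
        case 1 then show ?thesis using y yz by (cases y; cases z; simp add: mem_rel)
      next
        case (2 i) then show ?thesis using y yz by (cases y; simp add: mem_rel)
      next
        case 3 then show ?thesis using y yz assms(3) by (cases y; simp add: mem_rel)
      next
        case (4 i) then show ?thesis using y yz assms(2,4) by (cases y; auto simp add: mem_rel)
      qed
    qed
    then show "(lat_meet (Ln n) Ln_le x y, y) \<in> ?R" using lat_meet_eq[OF x y] by simp
  qed
  show ?thesis unfolding transfer_system_def using sub refl anti tr le res by blast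
qed

definition BB :: "nat \<Rightarrow> (elt \<times> elt) set set" where
  "BB n = (\<lambda>S. rel n S False {}) ` Pow {..<n}"
definition TT :: "nat \<Rightarrow> (elt \<times> elt) set set" where
  "TT n = (\<lambda>S. rel n {..<n} True S) ` Pow {..<n}"
definition MM :: "nat \<Rightarrow> (elt \<times> elt) set set" where
  "MM n = (\<lambda>i. rel n ({..<n} - {i}) False {i}) ` {..<n}"

lemma ts_cases:
  assumes ts: "transfer_system (Ln n) Ln_le R"
  shows "R \<in> BB n \<union> MM n \<union> TT n"
proof -
  define SB where "SB = {i. i < n \<and> (Bot, At i) \<in> R}"
  define ST where "ST = {i. i < n \<and> (At i, Top) \<in> R}"
  define bt where "bt = ((Bot, Top) \<in> R)"
  have sub: "R \<subseteq> Ln n \<times> Ln n" and refl: "\<forall>x\<in>Ln n. (x, x) \<in> R" and tr: "trans R"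
    and le: "\<forall>x y. (x, y) \<in> R \<longrightarrow> Ln_le x y"
    and res: "\<forall>x y z. (x, z) \<in> R \<longrightarrow> y \<in> Ln n \<longrightarrow> Ln_le y z \<longrightarrow> (lat_meet (Ln n) Ln_le x y, y) \<in> R"
    using ts unfolding transfer_system_def refl_on_def by blast+
  have R_eq: "R = rel n SB bt ST"
  proof
    show "R \<subseteq> rel n SB bt ST"
    proof
      fix p assume p: "p \<in> R"
      obtain a b where ab: "p = (a, b)" by force
      have "a \<in> Ln n" "b \<in> Ln n" "Ln_le a b" using p ab sub le by auto
      then show "p \<in> rel n SB bt ST" using p ab
        by (cases a; cases b; auto simp: mem_rel SB_def ST_def bt_def)
    qed
  next
    show "rel n SB bt ST \<subseteq> R"
      using refl by (auto simp: rel_def SB_def ST_def bt_def)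
  qed
  have SBU: "SB \<subseteq> {..<n}" "ST \<subseteq> {..<n}" by (auto simp: SB_def ST_def)
  have v1: "bt \<Longrightarrow> SB = {..<n}"
  proof -
    assume bt
    { fix j assume j: "j < n"
      have "(lat_meet (Ln n) Ln_le Bot (At j), At j) \<in> R"
        using res \<open>bt\<close> j unfolding bt_def by auto
      then have "(Bot, At j) \<in> R" using lat_meet_eq[of Bot n "At j"] j by simp }
    then show ?thesis by (auto simp: SB_def)
  qed
  have v2: "\<And>i j. i \<in> ST \<Longrightarrow> j < n \<Longrightarrow> j \<noteq> i \<Longrightarrow> j \<in> SB"
  proof -
    fix i j assume i: "i \<in> ST" and j: "j < n" "j \<noteq> i"
    have "(lat_meet (Ln n) Ln_le (At i) (At j), At j) \<in> R"
      using res i j unfolding ST_def by auto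
    then have "(Bot, At j) \<in> R" using lat_meet_eq[of "At i" n "At j"] i j by (simp add: ST_def)
    then show "j \<in> SB" using j by (simp add: SB_def)
  qed
  have v3: "\<And>i. i \<in> ST \<Longrightarrow> i \<in> SB \<Longrightarrow> bt"
    using tr unfolding SB_def ST_def bt_def trans_def by blast
  show ?thesis
  proof (cases bt)
    case True
    then have "R = rel n {..<n} True ST" using R_eq v1 by simp
    then show ?thesis using SBU by (auto simp: TT_def)
  next
    case False
    show ?thesis
    proof (cases "ST = {}")
      case True
      then have "R = rel n SB False {}" using R_eq False by simp
      then show ?thesis using SBU by (auto simp: BB_def)
    next
      case ne: False
      then obtain i where i: "i \<in> ST" by blast
      have STi: "ST = {i}"
      proof (rule ccontr)
        assume "ST \<noteq> {i}"
        then obtain k where k: "k \<in> ST" "k \<noteq> i" using i by blast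
        then have "i \<in> SB" using v2[of k i] i SBU by auto
        then show False using v3 i False by blast
      qed
      have "SB = {..<n} - {i}"
        using v2[OF i] v3[OF i] False SBU by auto
      then have "R = rel n ({..<n} - {i}) False {i}" using R_eq False STi by simp
      then show ?thesis using i SBU by (auto simp: MM_def)
    qed
  qed
qed

lemma TrL_eq: "TrL n = BB n \<union> MM n \<union> TT n"
proof
  show "TrL n \<subseteq> BB n \<union> MM n \<union> TT n" using ts_cases by (auto simp: Tr_def)
next
  show "BB n \<union> MM n \<union> TT n \<subseteq> TrL n"
    unfolding Tr_def BB_def MM_def TT_def by (auto intro!: ts_rel)
qed

abbreviation bi where "bi n i \<equiv> rel n ({..<n} - {i}) False {}"
abbreviation mi where "mi n i \<equiv> rel n ({..<n} - {i}) False {i}"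
abbreviation ti where "ti n i \<equiv> rel n {..<n} True {i}"
abbreviation maxB where "maxB n \<equiv> rel n {..<n} False {}"
abbreviation minT where "minT n \<equiv> rel n {..<n} True {}"

lemma BB_E: "X \<in> BB n \<Longrightarrow> (\<And>S. S \<subseteq> {..<n} \<Longrightarrow> X = rel n S False {} \<Longrightarrow> P) \<Longrightarrow> P"
  by (auto simp: BB_def)
lemma TT_E: "X \<in> TT n \<Longrightarrow> (\<And>S. S \<subseteq> {..<n} \<Longrightarrow> X = rel n {..<n} True S \<Longrightarrow> P) \<Longrightarrow> P"
  by (auto simp: TT_def)
lemma MM_E: "X \<in> MM n \<Longrightarrow> (\<And>i. i < n \<Longrightarrow> X = mi n i \<Longrightarrow> P) \<Longrightarrow> P"
  by (auto simp: MM_def)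
lemma BB_I: "S \<subseteq> {..<n} \<Longrightarrow> rel n S False {} \<in> BB n" by (auto simp: BB_def)
lemma TT_I: "S \<subseteq> {..<n} \<Longrightarrow> rel n {..<n} True S \<in> TT n" by (auto simp: TT_def)
lemma MM_I: "i < n \<Longrightarrow> mi n i \<in> MM n" by (auto simp: MM_def)

lemma covers_alt: "covers S X Y \<longleftrightarrow> X \<in> S \<and> Y \<in> S \<and> X \<subset> Y \<and> (\<forall>Z\<in>S. \<not> (X \<subset> Z \<and> Z \<subset> Y))"
  by (auto simp: covers_def)

lemma covers_TrL_imp:
  assumes c: "covers (TrL n) X Y"
  shows "covers (BB n) X Y \<or> covers (TT n) X Y \<or> (\<exists>i<n. X = bi n i \<and> Y = mi n i)
    \<or> (\<exists>i<n. X = mi n i \<and> Y = ti n i) \<or> (X = maxB n \<and> Y = minT n)"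
proof -
  have X: "X \<in> BB n \<union> MM n \<union> TT n" and Y: "Y \<in> BB n \<union> MM n \<union> TT n" and XY: "X \<subset> Y"
    and nZ: "\<And>Z. Z \<in> BB n \<union> MM n \<union> TT n \<Longrightarrow> \<not> (X \<subset> Z \<and> Z \<subset> Y)"
    using c unfolding covers_alt TrL_eq by blast+
  show ?thesis
  proof (cases "X \<in> BB n")
    case XB: True
    then obtain S where S: "S \<subseteq> {..<n}" "X = rel n S False {}" by (rule BB_E)
    show ?thesis
    proof (cases "Y \<in> BB n")
      case True
      then have "covers (BB n) X Y" using XB XY nZ unfolding covers_alt by blast
      then show ?thesis by blast
    next
      case YnB: False
      show ?thesis
      proof (cases "Y \<in> MM n")
        case True
        then obtain i where i: "i < n" "Y = mi n i" by (rule MM_E)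
        have Si: "S \<subseteq> {..<n} - {i}" using XY S i by (auto simp: rel_sub)
        have "S = {..<n} - {i}"
        proof (rule ccontr)
          assume "S \<noteq> {..<n} - {i}"
          then have "X \<subset> bi n i \<and> bi n i \<subset> Y" using S Si i by (auto simp: psubset_eq rel_sub rel_eq)
          moreover have "bi n i \<in> BB n \<union> MM n \<union> TT n" using BB_I[of "{..<n} - {i}" n] by auto
          ultimately show False using nZ by blast
        qed
        then show ?thesis using S i by blast
      next
        case False
        then have "Y \<in> TT n" using Y YnB by blast
        then obtain C where C: "C \<subseteq> {..<n}" "Y = rel n {..<n} True C" by (rule TT_E)
        have inB: "maxB n \<in> BB n \<union> MM n \<union> TT n" using BB_I[of "{..<n}" n] by auto
        have inT: "minT n \<in> BB n \<union> MM n \<union> TT n" using TT_I[of "{}" n] by auto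
        have "S = {..<n}"
        proof (rule ccontr)
          assume "S \<noteq> {..<n}"
          then have "X \<subset> maxB n \<and> maxB n \<subset> Y" using S C by (auto simp: psubset_eq rel_sub rel_eq)
          then show False using nZ inB by blast
        qed
        moreover have "C = {}"
        proof (rule ccontr)
          assume "C \<noteq> {}"
          then have "X \<subset> minT n \<and> minT n \<subset> Y" using S C \<open>S = {..<n}\<close> by (auto simp: psubset_eq rel_sub rel_eq)
          then show False using nZ inT by blast
        qed
        ultimately show ?thesis using S C by blast
      qed
    qed
  next
    case XnB: False
    show ?thesis
    proof (cases "X \<in> MM n")
      case True
      then obtain i where i: "i < n" "X = mi n i" by (rule MM_E)
      show ?thesis
      proof (cases "Y \<in> TT n")
        case True
        then obtain C where C: "C \<subseteq> {..<n}" "Y = rel n {..<n} True C" by (rule TT_E)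
        have iC: "i \<in> C" using XY i C by (auto simp: rel_sub)
        have inT: "ti n i \<in> BB n \<union> MM n \<union> TT n" using TT_I[of "{i}" n] i by auto
        have "C = {i}"
        proof (rule ccontr)
          assume "C \<noteq> {i}"
          then have "X \<subset> ti n i \<and> ti n i \<subset> Y" using i C iC by (auto simp: psubset_eq rel_sub rel_eq)
          then show False using nZ inT by blast
        qed
        then show ?thesis using i C by blast
      next
        case False
        then have "Y \<in> BB n \<or> Y \<in> MM n" using Y by blast
        then have False
        proof
          assume "Y \<in> BB n"
          then obtain S where "Y = rel n S False {}" by (rule BB_E)
          then show False using XY i by (auto simp: psubset_eq rel_sub rel_eq)
        next
          assume "Y \<in> MM n"
          then obtain j where "Y = mi n j" by (rule MM_E)
          then show False using XY i by (auto simp: psubset_eq rel_sub rel_eq)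
        qed
        then show ?thesis ..
      qed
    next
      case False
      then have XT: "X \<in> TT n" using X XnB by blast
      then obtain C where C: "X = rel n {..<n} True C" by (rule TT_E)
      show ?thesis
      proof (cases "Y \<in> TT n")
        case True
        then have "covers (TT n) X Y" using XT XY nZ unfolding covers_alt by blast
        then show ?thesis by blast
      next
        case False
        then have "Y \<in> BB n \<or> Y \<in> MM n" using Y by blast
        then have False
        proof
          assume "Y \<in> BB n"
          then obtain S where "Y = rel n S False {}" by (rule BB_E)
          then show False using XY C by (auto simp: psubset_eq rel_sub rel_eq)
        next
          assume "Y \<in> MM n"
          then obtain j where "Y = mi n j" by (rule MM_E)
          then show False using XY C by (auto simp: psubset_eq rel_sub rel_eq)
        qed
        then show ?thesis ..
      qed
    qed
  qed
qed

lemma covers_BB_TrL: assumes c: "covers (BB n) X Y" shows "covers (TrL n) X Y"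
proof -
  have X: "X \<in> BB n" and Y: "Y \<in> BB n" and XY: "X \<subset> Y" and nZ: "\<forall>Z\<in>BB n. \<not> (X \<subset> Z \<and> Z \<subset> Y)"
    using c unfolding covers_alt by blast+
  obtain S where S: "Y = rel n S False {}" using Y by (rule BB_E)
  have "\<not> (X \<subset> Z \<and> Z \<subset> Y)" if Z: "Z \<in> BB n \<union> MM n \<union> TT n" for Z
  proof -
    { assume "Z \<in> MM n" then obtain j where "Z = mi n j" by (rule MM_E)
      then have "\<not> Z \<subset> Y" using S by (auto simp: psubset_eq rel_sub rel_eq) }
    moreover
    { assume "Z \<in> TT n" then obtain C where "Z = rel n {..<n} True C" by (rule TT_E)
      then have "\<not> Z \<subset> Y" using S by (auto simp: psubset_eq rel_sub rel_eq) }
    ultimately show ?thesis using Z nZ by blast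
  qed
  then show ?thesis using X Y XY unfolding covers_alt TrL_eq by blast
qed

lemma covers_TT_TrL: assumes c: "covers (TT n) X Y" shows "covers (TrL n) X Y"
proof -
  have X: "X \<in> TT n" and Y: "Y \<in> TT n" and XY: "X \<subset> Y" and nZ: "\<forall>Z\<in>TT n. \<not> (X \<subset> Z \<and> Z \<subset> Y)"
    using c unfolding covers_alt by blast+
  obtain S where S: "X = rel n {..<n} True S" using X by (rule TT_E)
  have "\<not> (X \<subset> Z \<and> Z \<subset> Y)" if Z: "Z \<in> BB n \<union> MM n \<union> TT n" for Z
  proof -
    { assume "Z \<in> MM n" then obtain j where "Z = mi n j" by (rule MM_E)
      then have "\<not> X \<subset> Z" using S by (auto simp: psubset_eq rel_sub rel_eq) }
    moreover
    { assume "Z \<in> BB n" then obtain C where "Z = rel n C False {}" by (rule BB_E)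
      then have "\<not> X \<subset> Z" using S by (auto simp: psubset_eq rel_sub rel_eq) }
    ultimately show ?thesis using Z nZ by blast
  qed
  then show ?thesis using X Y XY unfolding covers_alt TrL_eq by blast
qed

lemma covers_bm: assumes i: "i < n" shows "covers (TrL n) (bi n i) (mi n i)"
proof -
  have "\<not> (bi n i \<subset> Z \<and> Z \<subset> mi n i)" if Z: "Z \<in> BB n \<union> MM n \<union> TT n" for Z
  proof -
    { assume "Z \<in> BB n" then obtain C where "C \<subseteq> {..<n}" "Z = rel n C False {}" by (rule BB_E)
      then have ?thesis using i by (auto simp: psubset_eq rel_sub rel_eq) }
    moreover
    { assume "Z \<in> MM n" then obtain j where "Z = mi n j" by (rule MM_E)
      then have ?thesis using i by (auto simp: psubset_eq rel_sub rel_eq) }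
    moreover
    { assume "Z \<in> TT n" then obtain C where "Z = rel n {..<n} True C" by (rule TT_E)
      then have ?thesis using i by (auto simp: psubset_eq rel_sub rel_eq) }
    ultimately show ?thesis using Z by blast
  qed
  moreover have "bi n i \<in> BB n" using BB_I[of "{..<n} - {i}" n] by auto
  moreover have "mi n i \<in> MM n" using MM_I[OF i] .
  moreover have "bi n i \<subset> mi n i" by (auto simp: psubset_eq rel_sub rel_eq)
  ultimately show ?thesis unfolding covers_alt TrL_eq by blast
qed

lemma covers_mt: assumes i: "i < n" shows "covers (TrL n) (mi n i) (ti n i)"
proof -
  have "\<not> (mi n i \<subset> Z \<and> Z \<subset> ti n i)" if Z: "Z \<in> BB n \<union> MM n \<union> TT n" for Z
  proof -
    { assume "Z \<in> BB n" then obtain C where "C \<subseteq> {..<n}" "Z = rel n C False {}" by (rule BB_E)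
      then have ?thesis using i by (auto simp: psubset_eq rel_sub rel_eq) }
    moreover
    { assume "Z \<in> MM n" then obtain j where "Z = mi n j" by (rule MM_E)
      then have ?thesis using i by (auto simp: psubset_eq rel_sub rel_eq) }
    moreover
    { assume "Z \<in> TT n" then obtain C where "Z = rel n {..<n} True C" by (rule TT_E)
      then have ?thesis using i by (auto simp: psubset_eq rel_sub rel_eq) }
    ultimately show ?thesis using Z by blast
  qed
  moreover have "ti n i \<in> TT n" using TT_I[of "{i}" n] i by auto
  moreover have "mi n i \<in> MM n" using MM_I[OF i] .
  moreover have "mi n i \<subset> ti n i" using i by (auto simp: psubset_eq rel_sub rel_eq)
  ultimately show ?thesis unfolding covers_alt TrL_eq by blast
qed

lemma covers_BT: "covers (TrL n) (maxB n) (minT n)"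
proof -
  have "\<not> (maxB n \<subset> Z \<and> Z \<subset> minT n)" if Z: "Z \<in> BB n \<union> MM n \<union> TT n" for Z
  proof -
    { assume "Z \<in> BB n" then obtain C where "C \<subseteq> {..<n}" "Z = rel n C False {}" by (rule BB_E)
      then have ?thesis by (auto simp: psubset_eq rel_sub rel_eq) }
    moreover
    { assume "Z \<in> MM n" then obtain j where "j < n" "Z = mi n j" by (rule MM_E)
      then have ?thesis by (auto simp: psubset_eq rel_sub rel_eq) }
    moreover
    { assume "Z \<in> TT n" then obtain C where "Z = rel n {..<n} True C" by (rule TT_E)
      then have ?thesis by (auto simp: psubset_eq rel_sub rel_eq) }
    ultimately show ?thesis using Z by blast
  qed
  moreover have "maxB n \<in> BB n" using BB_I[of "{..<n}" n] by auto
  moreover have "minT n \<in> TT n" using TT_I[of "{}" n] by auto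
  moreover have "maxB n \<subset> minT n" by (auto simp: psubset_eq rel_sub rel_eq)
  ultimately show ?thesis unfolding covers_alt TrL_eq by blast
qed

lemma Bset_eq: "Bset n = BB n"
proof
  show "Bset n \<subseteq> BB n"
  proof
    fix R assume R: "R \<in> Bset n"
    then have RT: "R \<in> BB n \<union> MM n \<union> TT n" and Rs: "R - Id \<subseteq> {(Bot, At i) |i. i < n}"
      unfolding Bset_def TrL_eq by blast+
    { assume "R \<in> MM n" then obtain j where "j < n" "R = mi n j" by (rule MM_E)
      then have "(At j, Top) \<in> R - Id" by (auto simp: mem_rel)
      then have False using Rs by blast }
    moreover
    { assume "R \<in> TT n" then obtain C where "R = rel n {..<n} True C" by (rule TT_E)
      then have "(Bot, Top) \<in> R - Id" by (auto simp: mem_rel)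
      then have False using Rs by blast }
    ultimately show "R \<in> BB n" using RT by blast
  qed
next
  show "BB n \<subseteq> Bset n"
  proof
    fix R assume R: "R \<in> BB n"
    then obtain S where S: "S \<subseteq> {..<n}" "R = rel n S False {}" by (rule BB_E)
    have "R - Id \<subseteq> {(Bot, At i) |i. i < n}"
    proof
      fix p assume "p \<in> R - Id"
      then obtain a b where "p = (a, b)" "(a, b) \<in> R" "a \<noteq> b" by (cases p) auto
      then show "p \<in> {(Bot, At i) |i. i < n}" using S by (auto simp: mem_rel)
    qed
    then show "R \<in> Bset n" using R unfolding Bset_def TrL_eq by blast
  qed
qed

lemma Tset_eq: "Tset n = TT n"
proof
  show "Tset n \<subseteq> TT n"
  proof
    fix R assume R: "R \<in> Tset n"
    then have RT: "R \<in> BB n \<union> MM n \<union> TT n" and Rs: "(Bot, Top) \<in> R"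
      unfolding Tset_def TrL_eq by blast+
    { assume "R \<in> MM n" then obtain j where "j < n" "R = mi n j" by (rule MM_E)
      then have False using Rs by (auto simp: mem_rel) }
    moreover
    { assume "R \<in> BB n" then obtain C where "R = rel n C False {}" by (rule BB_E)
      then have False using Rs by (auto simp: mem_rel) }
    ultimately show "R \<in> TT n" using RT by blast
  qed
next
  show "TT n \<subseteq> Tset n"
  proof
    fix R assume R: "R \<in> TT n"
    then obtain S where S: "S \<subseteq> {..<n}" "R = rel n {..<n} True S" by (rule TT_E)
    have "R - Id \<subseteq> {(Bot, At i) |i. i < n} \<union> {(Bot, Top)} \<union> {(At i, Top) |i. i < n}"
    proof
      fix p assume "p \<in> R - Id"
      then obtain a b where "p = (a, b)" "(a, b) \<in> R" "a \<noteq> b" by (cases p) auto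
      then show "p \<in> {(Bot, At i) |i. i < n} \<union> {(Bot, Top)} \<union> {(At i, Top) |i. i < n}"
        using S by (auto simp: mem_rel)
    qed
    moreover have "\<forall>i<n. (Bot, At i) \<in> R" "(Bot, Top) \<in> R" using S by (auto simp: mem_rel)
    ultimately show "R \<in> Tset n" using R unfolding Tset_def TrL_eq by blast
  qed
qed

lemma Mrel_eq: "Mrel n i = mi n i"
  by (auto simp: Mrel_def rel_def)

lemma Mset_eq: "Mset n = MM n"
  by (simp add: Mset_def MM_def Mrel_eq)

lemma inj_B: "inj_on (\<lambda>S. rel n S False {}) A" by (auto simp: inj_on_def rel_eq)
lemma inj_T: "inj_on (\<lambda>S. rel n {..<n} True S) A" by (auto simp: inj_on_def rel_eq)
lemma inj_M: "inj_on (mi n) {..<n}" by (auto simp: inj_on_def rel_eq)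
lemma inj_bi: "inj_on (bi n) {..<n}" by (auto simp: inj_on_def rel_eq)
lemma inj_ti: "inj_on (ti n) {..<n}" by (auto simp: inj_on_def rel_eq)

lemma card_BB: "card (BB n) = 2 ^ n"
  unfolding BB_def by (simp add: card_image[OF inj_B] card_Pow)
lemma card_TT: "card (TT n) = 2 ^ n"
  unfolding TT_def by (simp add: card_image[OF inj_T] card_Pow)
lemma card_MM: "card (MM n) = n"
  unfolding MM_def by (simp add: card_image[OF inj_M])

lemma disj: "BB n \<inter> MM n = {}" "BB n \<inter> TT n = {}" "MM n \<inter> TT n = {}"
  by (auto simp: BB_def MM_def TT_def rel_eq)

lemma fin: "finite (BB n)" "finite (MM n)" "finite (TT n)"
  by (auto simp: BB_def MM_def TT_def)

lemma card_TrL: "card (TrL n) = 2 ^ (n + 1) + n"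
proof -
  have "card (TrL n) = card (BB n \<union> MM n) + card (TT n)"
    unfolding TrL_eq using fin[of n] disj[of n] by (intro card_Un_disjoint) auto
  also have "card (BB n \<union> MM n) = card (BB n) + card (MM n)"
    using fin[of n] disj[of n] by (intro card_Un_disjoint) auto
  finally show ?thesis by (simp add: card_BB card_MM card_TT)
qed

lemma maxB_eq: "(GREATEST X. X \<in> BB n) = maxB n"
  apply (rule Greatest_equality)
   apply (rule BB_I, simp)
  apply (erule BB_E)
  apply (simp add: rel_sub)
  done
lemma minT_eq: "(LEAST X. X \<in> TT n) = minT n"
  apply (rule Least_equality)
   apply (rule TT_I, simp)
  apply (erule TT_E)
  apply (simp add: rel_sub)
  done

lemma Bsub_eq: "{X. covers (BB n) X (maxB n)} = bi n ` {..<n}"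
proof
  show "{X. covers (BB n) X (maxB n)} \<subseteq> bi n ` {..<n}"
  proof
    fix X assume "X \<in> {X. covers (BB n) X (maxB n)}"
    then have X: "X \<in> BB n" and XY: "X \<subset> maxB n" and nZ: "\<forall>Z\<in>BB n. \<not> (X \<subset> Z \<and> Z \<subset> maxB n)"
      unfolding covers_alt by blast+
    obtain S where S: "S \<subseteq> {..<n}" "X = rel n S False {}" using X by (rule BB_E)
    have "S \<noteq> {..<n}" using XY S by auto
    then obtain i where i: "i < n" "i \<notin> S" using S by auto
    have "S = {..<n} - {i}"
    proof (rule ccontr)
      assume "S \<noteq> {..<n} - {i}"
      then have "X \<subset> bi n i \<and> bi n i \<subset> maxB n" using S i by (auto simp: psubset_eq rel_sub rel_eq)
      moreover have "bi n i \<in> BB n" using BB_I[of "{..<n} - {i}" n] by auto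
      ultimately show False using nZ by blast
    qed
    then show "X \<in> bi n ` {..<n}" using S i by auto
  qed
next
  show "bi n ` {..<n} \<subseteq> {X. covers (BB n) X (maxB n)}"
  proof safe
    fix i assume i: "i < n"
    have "\<not> (bi n i \<subset> Z \<and> Z \<subset> maxB n)" if ZB: "Z \<in> BB n" for Z
    proof -
      obtain C where C: "C \<subseteq> {..<n}" "Z = rel n C False {}" using ZB by (rule BB_E)
      show ?thesis
      proof
        assume h: "bi n i \<subset> Z \<and> Z \<subset> maxB n"
        then have "{..<n} - {i} \<subseteq> C" "C \<noteq> {..<n} - {i}" "C \<noteq> {..<n}" using C by (auto simp: psubset_eq rel_sub rel_eq)
        then show False using C(1) by (metis Diff_insert_absorb insert_Diff_single insert_absorb insert_mono subset_antisym lessThan_iff \<open>i < n\<close> subset_Diff_insert)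
      qed
    qed
    moreover have "bi n i \<in> BB n" "maxB n \<in> BB n" using BB_I[of "{..<n} - {i}" n] BB_I[of "{..<n}" n] by auto
    moreover have "bi n i \<subset> maxB n" using i by (auto simp: psubset_eq rel_sub rel_eq)
    ultimately show "covers (BB n) (bi n i) (maxB n)" unfolding covers_alt by blast
  qed
qed

lemma Tsub_eq: "{Y. covers (TT n) (minT n) Y} = ti n ` {..<n}"
proof
  show "{Y. covers (TT n) (minT n) Y} \<subseteq> ti n ` {..<n}"
  proof
    fix Y assume "Y \<in> {Y. covers (TT n) (minT n) Y}"
    then have Y: "Y \<in> TT n" and XY: "minT n \<subset> Y" and nZ: "\<forall>Z\<in>TT n. \<not> (minT n \<subset> Z \<and> Z \<subset> Y)"
      unfolding covers_alt by blast+
    obtain C where C: "C \<subseteq> {..<n}" "Y = rel n {..<n} True C" using Y by (rule TT_E)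
    have "C \<noteq> {}" using XY C by auto
    then obtain i where i: "i \<in> C" by auto
    have "C = {i}"
    proof (rule ccontr)
      assume "C \<noteq> {i}"
      then have "minT n \<subset> ti n i \<and> ti n i \<subset> Y" using C i by (auto simp: psubset_eq rel_sub rel_eq)
      moreover have "ti n i \<in> TT n" using TT_I[of "{i}" n] C i by auto
      ultimately show False using nZ by blast
    qed
    then show "Y \<in> ti n ` {..<n}" using C i by auto
  qed
next
  show "ti n ` {..<n} \<subseteq> {Y. covers (TT n) (minT n) Y}"
  proof safe
    fix i assume i: "i < n"
    have "\<not> (minT n \<subset> Z \<and> Z \<subset> ti n i)" if ZB: "Z \<in> TT n" for Z
    proof -
      obtain C where C: "C \<subseteq> {..<n}" "Z = rel n {..<n} True C" using ZB by (rule TT_E)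
      show ?thesis
      proof
        assume h: "minT n \<subset> Z \<and> Z \<subset> ti n i"
        then have "C \<subseteq> {i}" "C \<noteq> {}" "C \<noteq> {i}" using C by (auto simp: psubset_eq rel_sub rel_eq)
        then show False by (metis subset_singletonD)
      qed
    qed
    moreover have "ti n i \<in> TT n" "minT n \<in> TT n" using TT_I[of "{i}" n] TT_I[of "{}" n] i by auto
    moreover have "minT n \<subset> ti n i" by (auto simp: psubset_eq rel_sub rel_eq)
    ultimately show "covers (TT n) (minT n) (ti n i)" unfolding covers_alt by blast
  qed
qed

theorem proposition5p2:
  fixes n :: nat
  shows "card (TrL n) = 2 ^ (n + 1) + n \<and>
    (n \<ge> 1 \<longrightarrow>
      (let B = Bset n; M = Mset n; T = Tset n;
           maxB = (GREATEST X. X \<in> B); minT = (LEAST X. X \<in> T);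
           Bsub = {X. covers B X maxB}; Tsub = {Y. covers T minT Y} in
        B \<union> M \<union> T = TrL n \<and> B \<inter> M = {} \<and> B \<inter> T = {} \<and> M \<inter> T = {} \<and>
        card M = n \<and>
        (\<exists>f. bij_betw f (Pow {..<n}) B \<and>
              (\<forall>S\<in>Pow {..<n}. \<forall>S'\<in>Pow {..<n}. S \<subseteq> S' \<longleftrightarrow> f S \<subseteq> f S')) \<and>
        (\<exists>g. bij_betw g (Pow {..<n}) T \<and>
              (\<forall>S\<in>Pow {..<n}. \<forall>S'\<in>Pow {..<n}. S \<subseteq> S' \<longleftrightarrow> g S \<subseteq> g S')) \<and>
        maxB \<in> B \<and> (\<forall>X\<in>B. X \<subseteq> maxB) \<and> minT \<in> T \<and> (\<forall>X\<in>T. minT \<subseteq> X) \<and>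
        card Bsub = n \<and> card Tsub = n \<and>
        (\<exists>\<phi> \<psi>. bij_betw \<phi> Bsub M \<and> bij_betw \<psi> Tsub M \<and>
          (\<forall>X Y. covers (TrL n) X Y \<longleftrightarrow>
             (X \<in> B \<and> Y \<in> B \<and> covers B X Y) \<or>
             (X \<in> T \<and> Y \<in> T \<and> covers T X Y) \<or>
             (X \<in> Bsub \<and> Y = \<phi> X) \<or>
             (Y \<in> Tsub \<and> X = \<psi> Y) \<or>
             (X = maxB \<and> Y = minT)))))"
proof -
  let ?U = "{..<n}"
  have e1: "\<exists>f. bij_betw f (Pow ?U) (BB n) \<and> (\<forall>S\<in>Pow ?U. \<forall>S'\<in>Pow ?U. S \<subseteq> S' \<longleftrightarrow> f S \<subseteq> f S')"
    by (rule exI[of _ "\<lambda>S. rel n S False {}"]) (auto simp: bij_betw_def inj_B BB_def rel_sub)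
  have e2: "\<exists>g. bij_betw g (Pow ?U) (TT n) \<and> (\<forall>S\<in>Pow ?U. \<forall>S'\<in>Pow ?U. S \<subseteq> S' \<longleftrightarrow> g S \<subseteq> g S')"
    by (rule exI[of _ "\<lambda>S. rel n ?U True S"]) (auto simp: bij_betw_def inj_T TT_def rel_sub)
  define \<phi> where "\<phi> = mi n \<circ> inv_into ?U (bi n)"
  define \<psi> where "\<psi> = mi n \<circ> inv_into ?U (ti n)"
  have bM: "bij_betw (mi n) ?U (MM n)" unfolding MM_def by (rule bij_betw_imageI[OF inj_M refl])
  have b\<phi>: "bij_betw \<phi> (bi n ` ?U) (MM n)" unfolding \<phi>_def
    by (rule bij_betw_trans[OF bij_betw_inv_into[OF bij_betw_imageI[OF inj_bi refl]] bM])
  have b\<psi>: "bij_betw \<psi> (ti n ` ?U) (MM n)" unfolding \<psi>_def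
    by (rule bij_betw_trans[OF bij_betw_inv_into[OF bij_betw_imageI[OF inj_ti refl]] bM])
  have \<phi>i: "\<And>i. i < n \<Longrightarrow> \<phi> (bi n i) = mi n i" by (simp add: \<phi>_def inv_into_f_f[OF inj_bi])
  have \<psi>i: "\<And>i. i < n \<Longrightarrow> \<psi> (ti n i) = mi n i" by (simp add: \<psi>_def inv_into_f_f[OF inj_ti])
  have cov: "\<forall>X Y. covers (TrL n) X Y \<longleftrightarrow>
             (X \<in> BB n \<and> Y \<in> BB n \<and> covers (BB n) X Y) \<or>
             (X \<in> TT n \<and> Y \<in> TT n \<and> covers (TT n) X Y) \<or>
             (X \<in> bi n ` ?U \<and> Y = \<phi> X) \<or>
             (Y \<in> ti n ` ?U \<and> X = \<psi> Y) \<or>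
             (X = maxB n \<and> Y = minT n)"
  proof (intro allI iffI)
    fix X Y assume "covers (TrL n) X Y"
    from covers_TrL_imp[OF this] show "(X \<in> BB n \<and> Y \<in> BB n \<and> covers (BB n) X Y) \<or>
             (X \<in> TT n \<and> Y \<in> TT n \<and> covers (TT n) X Y) \<or>
             (X \<in> bi n ` ?U \<and> Y = \<phi> X) \<or>
             (Y \<in> ti n ` ?U \<and> X = \<psi> Y) \<or>
             (X = maxB n \<and> Y = minT n)"
    proof (elim disjE exE conjE)
      assume "covers (BB n) X Y" then show ?thesis unfolding covers_def by blast
    next
      assume "covers (TT n) X Y" then show ?thesis unfolding covers_def by blast
    next
      fix i assume i: "i < n" "X = bi n i" "Y = mi n i"
      then have "X \<in> bi n ` ?U \<and> Y = \<phi> X" using \<phi>i[OF i(1)] by auto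
      then show ?thesis by (intro disjI2 disjI1)
    next
      fix i assume i: "i < n" "X = mi n i" "Y = ti n i"
      then have "Y \<in> ti n ` ?U \<and> X = \<psi> Y" using \<psi>i[OF i(1)] by auto
      then show ?thesis by (intro disjI2 disjI1)
    next
      assume "X = maxB n" "Y = minT n" then show ?thesis by blast
    qed
  next
    fix X Y assume "(X \<in> BB n \<and> Y \<in> BB n \<and> covers (BB n) X Y) \<or>
             (X \<in> TT n \<and> Y \<in> TT n \<and> covers (TT n) X Y) \<or>
             (X \<in> bi n ` ?U \<and> Y = \<phi> X) \<or>
             (Y \<in> ti n ` ?U \<and> X = \<psi> Y) \<or>
             (X = maxB n \<and> Y = minT n)"
    then show "covers (TrL n) X Y"
    proof (elim disjE conjE)
      assume "covers (BB n) X Y" then show ?thesis by (rule covers_BB_TrL)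
    next
      assume "covers (TT n) X Y" then show ?thesis by (rule covers_TT_TrL)
    next
      assume "X \<in> bi n ` ?U" "Y = \<phi> X"
      then obtain i where "i < n" "X = bi n i" "Y = mi n i" using \<phi>i by auto
      then show ?thesis using covers_bm by simp
    next
      assume "Y \<in> ti n ` ?U" "X = \<psi> Y"
      then obtain i where "i < n" "Y = ti n i" "X = mi n i" using \<psi>i by auto
      then show ?thesis using covers_mt by simp
    next
      assume "X = maxB n" "Y = minT n" then show ?thesis using covers_BT by simp
    qed
  qed
  have e3: "\<exists>\<phi> \<psi>. bij_betw \<phi> (bi n ` ?U) (MM n) \<and> bij_betw \<psi> (ti n ` ?U) (MM n) \<and>
          (\<forall>X Y. covers (TrL n) X Y \<longleftrightarrow>
             (X \<in> BB n \<and> Y \<in> BB n \<and> covers (BB n) X Y) \<or>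
             (X \<in> TT n \<and> Y \<in> TT n \<and> covers (TT n) X Y) \<or>
             (X \<in> bi n ` ?U \<and> Y = \<phi> X) \<or>
             (Y \<in> ti n ` ?U \<and> X = \<psi> Y) \<or>
             (X = maxB n \<and> Y = minT n))"
    using b\<phi> b\<psi> cov by blast
  have c1: "card (bi n ` ?U) = n" by (simp add: card_image[OF inj_bi])
  have c2: "card (ti n ` ?U) = n" by (simp add: card_image[OF inj_ti])
  have m1: "maxB n \<in> BB n" "\<forall>X\<in>BB n. X \<subseteq> maxB n" "minT n \<in> TT n" "\<forall>X\<in>TT n. minT n \<subseteq> X"
  proof -
    show "maxB n \<in> BB n" by (rule BB_I) simp
    show "minT n \<in> TT n" by (rule TT_I) simp
    show "\<forall>X\<in>BB n. X \<subseteq> maxB n"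
    proof
      fix X assume "X \<in> BB n" then obtain S where "S \<subseteq> ?U" "X = rel n S False {}" by (rule BB_E)
      then show "X \<subseteq> maxB n" by (simp only: rel_sub) simp
    qed
    show "\<forall>X\<in>TT n. minT n \<subseteq> X"
    proof
      fix X assume "X \<in> TT n" then obtain S where "S \<subseteq> ?U" "X = rel n ?U True S" by (rule TT_E)
      then show "minT n \<subseteq> X" by (simp only: rel_sub) simp
    qed
  qed
  show ?thesis
    unfolding Let_def Bset_eq Tset_eq Mset_eq maxB_eq minT_eq Bsub_eq Tsub_eq
    apply (intro conjI impI)
                   apply (rule card_TrL)
                  apply (rule TrL_eq[symmetric])
                 apply (rule disj)
                apply (rule disj)
               apply (rule disj)
              apply (rule card_MM)
             apply (rule e1)
            apply (rule e2)
           apply (rule m1)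
          apply (rule m1)
         apply (rule m1)
        apply (rule m1)
       apply (rule c1)
      apply (rule c2)
     apply (rule e3)
    done
qed

end
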